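(* $\mathfrak{ss}_c^{ui}=\mathfrak d$ and $(\mathfrak{ss}_c^{ui})^\perp=\mathfrak b$.
   Context: Let $\mathfrak S$ be the set of all sequences $\mathbf a=\langle a_i:i\in\omega\rangle$ of rational numbers with $a_i\to0$. For infinite $X\subseteq\omega$ with increasing enumeration $\langle i_n\rangle$, $\sum_X\mathbf a$ denotes $\sum_n a_{i_n}$; $[\omega]^\omega_\omega$ is the set of infinite coinfinite subsets of $\omega$. A series tends to infinity if its partial sums tend to $+\infty$ or to $-\infty$; it is conditional if the sum of its positive terms is $+\infty$ and the sum of its negative terms is $-\infty$; it tends unconditionally to infinity if it tends to infinity and is not conditional. Let $\mathfrak S_{ui}$ be the set of $\mathbf a\in\mathfrak S$ with $\sum\mathbf a$ tending unconditionally to infinity. $\mathfrak{ss}_c^{ui}$ is the least cardinality of $\mathcal X\subseteq[\omega]^\omega_\omega$ such that every $\mathbf a\in\mathfrak S_{ui}$ has some $X\in\mathcal X$ with $\sum_X\mathbf a$ convergent (to a real number); $(\mathfrak{ss}_c^{ui})^\perp$ is the least cardinality of $\mathcal A\subseteq\mathfrak S_{ui}$ such that no $X\in[\omega]^\omega_\omega$ makes $\sum_X\mathbf a$ convergent for all $\mathbf a\in\mathcal A$. $\mathfrak b$, $\mathfrak d$ are the bounding and dominating numbers. *)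

theory Defs
  imports "HOL-Analysis.Analysis" "HOL-Library.Infinite_Set"
begin

definition null_seqs :: "(nat \<Rightarrow> rat) set" where
  "null_seqs = {a. (\<lambda>i. real_of_rat (a i)) \<longlonglongrightarrow> 0}"

definition infcoinf :: "nat set set" where
  "infcoinf = {X. infinite X \<and> infinite (- X)}"

definition sub_convergent :: "nat set \<Rightarrow> (nat \<Rightarrow> rat) \<Rightarrow> bool" where
  "sub_convergent X a \<longleftrightarrow> summable (\<lambda>n. real_of_rat (a (enumerate X n)))"

definition psums :: "(nat \<Rightarrow> real) \<Rightarrow> nat \<Rightarrow> real" where
  "psums f n = (\<Sum>i<n. f i)"

definition tends_to_infinity :: "(nat \<Rightarrow> rat) \<Rightarrow> bool" where
  "tends_to_infinity a \<longleftrightarrow>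
     filterlim (psums (\<lambda>i. real_of_rat (a i))) at_top sequentially \<or>
     filterlim (psums (\<lambda>i. real_of_rat (a i))) at_bot sequentially"

definition conditional :: "(nat \<Rightarrow> rat) \<Rightarrow> bool" where
  "conditional a \<longleftrightarrow>
     filterlim (psums (\<lambda>i. max (real_of_rat (a i)) 0)) at_top sequentially \<and>
     filterlim (psums (\<lambda>i. min (real_of_rat (a i)) 0)) at_bot sequentially"

definition S_ui :: "(nat \<Rightarrow> rat) set" where
  "S_ui = {a \<in> null_seqs. tends_to_infinity a \<and> \<not> conditional a}"

definition ss_family :: "nat set set \<Rightarrow> bool" where
  "ss_family \<X> \<longleftrightarrow> \<X> \<subseteq> infcoinf \<and> (\<forall>a\<in>S_ui. \<exists>X\<in>\<X>. sub_convergent X a)"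

definition ss_dual_family :: "(nat \<Rightarrow> rat) set \<Rightarrow> bool" where
  "ss_dual_family \<A> \<longleftrightarrow> \<A> \<subseteq> S_ui \<and> \<not> (\<exists>X\<in>infcoinf. \<forall>a\<in>\<A>. sub_convergent X a)"

definition le_star :: "(nat \<Rightarrow> nat) \<Rightarrow> (nat \<Rightarrow> nat) \<Rightarrow> bool" where
  "le_star f g \<longleftrightarrow> (\<forall>\<^sub>F n in sequentially. f n \<le> g n)"

definition unbounded_family :: "(nat \<Rightarrow> nat) set \<Rightarrow> bool" where
  "unbounded_family F \<longleftrightarrow> \<not> (\<exists>g. \<forall>f\<in>F. le_star f g)"

definition dominating_family :: "(nat \<Rightarrow> nat) set \<Rightarrow> bool" where
  "dominating_family F \<longleftrightarrow> (\<forall>g. \<exists>f\<in>F. le_star g f)"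

text \<open>The least cardinality of a family satisfying P equals the least cardinality of
  a family satisfying Q (both minima exist by well-ordering of cardinals, given nonemptiness,
  which follows from the statement itself).\<close>
definition same_min_card :: "('a set \<Rightarrow> bool) \<Rightarrow> ('b set \<Rightarrow> bool) \<Rightarrow> bool" where
  "same_min_card P Q \<longleftrightarrow>
     (\<exists>A. P A) \<and> (\<exists>B. Q B) \<and>
     (\<forall>A. P A \<longrightarrow> (\<exists>B. Q B \<and> ordLeq3 (card_of B) (card_of A))) \<and>
     (\<forall>B. Q B \<longrightarrow> (\<exists>A. P A \<and> ordLeq3 (card_of A) (card_of B)))"

end

theory Submission
  imports Defs
begin

definition Gf :: "(nat \<Rightarrow> nat) \<Rightarrow> nat \<Rightarrow> nat" where
  "Gf g n = (\<Sum>k\<le>n. g k + 1)"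

lemma Gf_Suc: "Gf g (Suc n) = Gf g n + g (Suc n) + 1"
  by (simp add: Gf_def)

lemma Gf_ge: "g n \<le> Gf g n"
  unfolding Gf_def by (rule order_trans[of _ "g n + 1"]) (auto intro: member_le_sum)

lemma Gf_gt: "n < Gf g n"
  by (induction n) (auto simp: Gf_Suc Gf_def)

lemma Gf_smono: "strict_mono (Gf g)"
  by (rule strict_mono_Suc_iff[THEN iffD2]) (simp add: Gf_Suc)

lemma Gf_mono: "m \<le> n \<Longrightarrow> Gf g m \<le> Gf g n"
  using Gf_smono strict_mono_less_eq by blast

definition Lv :: "(nat \<Rightarrow> nat) \<Rightarrow> nat \<Rightarrow> nat" where
  "Lv g i = (LEAST n. i < Gf g n)"

lemma Lv_le: "i < Gf g n \<Longrightarrow> Lv g i \<le> n"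
  unfolding Lv_def by (rule Least_le)

lemma Lv_lt: "i < Gf g (Lv g i)"
  unfolding Lv_def by (rule LeastI[of _ i]) (rule Gf_gt)

lemma Lv_le_i: "Lv g i \<le> i"
  by (rule Lv_le) (rule Gf_gt)

lemma Lv_big: "Gf g m \<le> i \<Longrightarrow> m < Lv g i"
  using Lv_lt[of i g] Gf_mono[of "Lv g i" m g] by (meson le_less_trans not_le_imp_less less_le_not_le)

definition aseq :: "(nat \<Rightarrow> nat) \<Rightarrow> nat \<Rightarrow> rat" where
  "aseq g i = 1 / (of_nat (Lv g i) + 1)"

lemma aseq_real: "real_of_rat (aseq g i) = 1 / (real (Lv g i) + 1)"
  by (simp add: aseq_def of_rat_divide of_rat_add)

lemma Lv_at_top: "filterlim (Lv g) at_top sequentially"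
  unfolding filterlim_at_top
proof
  fix m
  show "eventually (\<lambda>i. m \<le> Lv g i) sequentially"
    using Lv_big[of g m] by (intro eventually_sequentiallyI[of "Gf g m"]) (auto intro: less_imp_le)
qed

lemma aseq_null: "aseq g \<in> null_seqs"
proof -
  have "filterlim (\<lambda>i. real (Lv g i) + 1) at_top sequentially"
    by (rule filterlim_at_top_mono[OF filterlim_compose[OF filterlim_real_sequentially Lv_at_top[of g]]]) auto
  then have "(\<lambda>i. inverse (real (Lv g i) + 1)) \<longlonglongrightarrow> 0"
    by (rule tendsto_inverse_0_at_top)
  then show ?thesis unfolding null_seqs_def by (simp add: aseq_real divide_inverse)
qed

lemma aseq_tends: "tends_to_infinity (aseq g)"
  unfolding tends_to_infinity_def
proof (rule disjI1, rule filterlim_at_top_mono[OF harm_at_top])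
  show "\<forall>\<^sub>F n in sequentially. harm n \<le> psums (\<lambda>i. real_of_rat (aseq g i)) n"
  proof (intro always_eventually allI)
    fix n
    have "harm n = (\<Sum>i<n. 1 / (real i + 1))"
      by (induction n) (auto simp: harm_Suc harm_def field_simps)
    also have "\<dots> \<le> (\<Sum>i<n. real_of_rat (aseq g i))"
      unfolding aseq_real using Lv_le_i
      by (intro sum_mono divide_left_mono) auto
    finally show "harm n \<le> psums (\<lambda>i. real_of_rat (aseq g i)) n" by (simp add: psums_def)
  qed
qed

lemma aseq_notcond: "\<not> conditional (aseq g)"
proof
  assume "conditional (aseq g)"
  then have "filterlim (psums (\<lambda>i. min (real_of_rat (aseq g i)) 0)) at_bot sequentially"
    unfolding conditional_def by blast
  moreover have "psums (\<lambda>i. min (real_of_rat (aseq g i)) 0) = (\<lambda>_. 0)"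
    by (auto simp: psums_def aseq_real intro!: ext sum.neutral)
  ultimately have "filterlim (\<lambda>_::nat. 0::real) at_bot sequentially" by simp
  then have "eventually (\<lambda>_::nat. (0::real) \<le> -1) sequentially"
    unfolding filterlim_at_bot by blast
  then show False by simp
qed

lemma aseq_S_ui: "aseq g \<in> S_ui"
  using aseq_null aseq_tends aseq_notcond unfolding S_ui_def by blast

definition fX :: "nat set \<Rightarrow> nat \<Rightarrow> nat" where
  "fX X n = enumerate X (n * (n + 1))"

lemma aseq_key:
  assumes inf: "infinite X" and sc: "sub_convergent X (aseq g)"
  shows "le_star g (fX X)"
proof -
  let ?t = "\<lambda>j. real_of_rat (aseq g (enumerate X j))"
  have sm: "summable ?t" using sc unfolding sub_convergent_def .
  have nn: "\<And>j. 0 \<le> ?t j" by (simp add: aseq_real)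
  define s where "s = suminf ?t"
  have bound: "\<And>N. (\<Sum>j<N. ?t j) \<le> s"
    unfolding s_def using sm nn by (intro sum_le_suminf) auto
  obtain N :: nat where N: "s < real N" using reals_Archimedean2 by blast
  have "g n \<le> fX X n" if "N \<le> n" for n
  proof (rule ccontr)
    assume "\<not> g n \<le> fX X n"
    then have lt: "fX X n < Gf g n" using Gf_ge[of g n] by simp
    have "\<And>j. j < n * (n + 1) + 1 \<Longrightarrow> 1 / (real n + 1) \<le> ?t j"
    proof -
      fix j assume "j < n * (n + 1) + 1"
      then have "enumerate X j \<le> fX X n" unfolding fX_def using inf by simp
      then have "Lv g (enumerate X j) \<le> n" using lt by (intro Lv_le) simp
      then show "1 / (real n + 1) \<le> ?t j" unfolding aseq_real
        by (intro divide_left_mono) auto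
    qed
    then have "(\<Sum>j<n * (n + 1) + 1. 1 / (real n + 1)) \<le> (\<Sum>j<n * (n + 1) + 1. ?t j)"
      by (intro sum_mono) auto
    also have "\<dots> \<le> s" by (rule bound)
    finally have "real (n * (n + 1) + 1) / (real n + 1) \<le> s" by simp
    moreover have "real n < real (n * (n + 1) + 1) / (real n + 1)"
      by (simp add: field_simps)
    ultimately show False using N that by linarith
  qed
  then show ?thesis unfolding le_star_def eventually_sequentially by blast
qed

definition Hf :: "(nat \<Rightarrow> nat) \<Rightarrow> nat \<Rightarrow> nat" where
  "Hf g n = 2 * Gf g n"

lemma Hf_smono: "strict_mono (Hf g)"
  using Gf_smono unfolding Hf_def strict_mono_def by auto

lemma Hf_ge: "g n \<le> Hf g n"
  using Gf_ge[of g n] unfolding Hf_def by simp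

lemma enumerate_range_smono:
  fixes H :: "nat \<Rightarrow> nat"
  assumes H: "strict_mono H"
  shows "enumerate (range H) n = H n"
proof (induction n)
  have inf: "infinite (range H)" using H strict_mono_imp_inj_on finite_imageD by blast
  case 0
  show ?case unfolding enumerate_0
    by (rule Least_equality) (auto simp: H strict_mono_less_eq)
next
  case (Suc n)
  have inf: "infinite (range H)" using H strict_mono_imp_inj_on finite_imageD by blast
  show ?case unfolding enumerate_Suc''[OF inf] Suc
  proof (rule Least_equality)
    show "H (Suc n) \<in> range H \<and> H n < H (Suc n)" using H by (auto simp: strict_mono_less)
    show "\<And>y. y \<in> range H \<and> H n < y \<Longrightarrow> H (Suc n) \<le> y"
      using H by (auto simp: strict_mono_less strict_mono_less_eq Suc_le_eq)
  qed
qed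

lemma Hf_infcoinf: "range (Hf g) \<in> infcoinf"
proof -
  have "infinite (range (Hf g))"
    using Hf_smono strict_mono_imp_inj_on finite_imageD by blast
  moreover have "range (\<lambda>k::nat. 2 * k + 1) \<subseteq> - range (Hf g)"
    unfolding Hf_def by auto presburger
  moreover have "infinite (range (\<lambda>k::nat. 2 * k + 1))"
    by (rule range_inj_infinite) (auto simp: inj_on_def)
  ultimately show ?thesis unfolding infcoinf_def using infinite_super by blast
qed

definition ga :: "(nat \<Rightarrow> rat) \<Rightarrow> nat \<Rightarrow> nat" where
  "ga a n = (LEAST m. \<forall>i\<ge>m. \<bar>real_of_rat (a i)\<bar> \<le> (1/2)^n)"

lemma ga_prop:
  assumes "a \<in> null_seqs" "ga a n \<le> i"
  shows "\<bar>real_of_rat (a i)\<bar> \<le> (1/2)^n"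
proof -
  have "(\<lambda>i. real_of_rat (a i)) \<longlonglongrightarrow> 0" using assms(1) unfolding null_seqs_def by simp
  then have "eventually (\<lambda>i. dist (real_of_rat (a i)) 0 < (1/2)^n) sequentially"
    by (rule tendstoD) simp
  then obtain M where "\<forall>i\<ge>M. \<bar>real_of_rat (a i)\<bar> \<le> (1/2)^n"
    unfolding eventually_sequentially dist_real_def by (metis diff_zero less_imp_le)
  then have "\<forall>i\<ge>ga a n. \<bar>real_of_rat (a i)\<bar> \<le> (1/2)^n"
    unfolding ga_def by (rule LeastI)
  then show ?thesis using assms(2) by blast
qed

lemma Hf_conv:
  assumes a: "a \<in> null_seqs" and le: "le_star (ga a) (Hf g)"
  shows "sub_convergent (range (Hf g)) a"
  unfolding sub_convergent_def enumerate_range_smono[OF Hf_smono]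
proof (rule summable_comparison_test_ev)
  show "summable (\<lambda>n. (1/2::real)^n)" by simp
  show "\<forall>\<^sub>F n in sequentially. norm (real_of_rat (a (Hf g n))) \<le> (1/2)^n"
    using le unfolding le_star_def by eventually_elim (use ga_prop[OF a] in auto)
qed

lemma le_star_trans_pw: "le_star f g \<Longrightarrow> (\<And>n. g n \<le> h n) \<Longrightarrow> le_star f h"
  unfolding le_star_def by (erule eventually_mono) (metis order_trans)

lemma P1: "ss_family XX \<Longrightarrow> dominating_family (fX ` XX)"
  unfolding dominating_family_def
proof
  fix g assume XX: "ss_family XX"
  then obtain X where X: "X \<in> XX" "sub_convergent X (aseq g)"
    using aseq_S_ui unfolding ss_family_def by blast
  then have "infinite X" using XX unfolding ss_family_def infcoinf_def by blast
  then show "\<exists>f\<in>fX ` XX. le_star g f" using aseq_key X by blast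
qed

lemma P2: "dominating_family D \<Longrightarrow> ss_family ((\<lambda>f. range (Hf f)) ` D)"
  unfolding ss_family_def
proof (intro conjI ballI)
  show "(\<lambda>f. range (Hf f)) ` D \<subseteq> infcoinf" using Hf_infcoinf by blast
  fix a assume "dominating_family D" "a \<in> S_ui"
  then obtain f where f: "f \<in> D" "le_star (ga a) f" unfolding dominating_family_def by blast
  have "le_star (ga a) (Hf f)" using f(2) Hf_ge le_star_trans_pw by blast
  then have "sub_convergent (range (Hf f)) a"
    using Hf_conv \<open>a \<in> S_ui\<close> unfolding S_ui_def by blast
  then show "\<exists>X\<in>(\<lambda>f. range (Hf f)) ` D. sub_convergent X a" using f(1) by blast
qed

lemma P3: "ss_dual_family A \<Longrightarrow> unbounded_family (ga ` A)"
  unfolding unbounded_family_def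
proof
  assume A: "ss_dual_family A" and "\<exists>g. \<forall>f\<in>ga ` A. le_star f g"
  then obtain g where g: "\<And>a. a \<in> A \<Longrightarrow> le_star (ga a) g" by blast
  have "\<forall>a\<in>A. sub_convergent (range (Hf g)) a"
  proof
    fix a assume "a \<in> A"
    then have "a \<in> null_seqs" using A unfolding ss_dual_family_def S_ui_def by blast
    moreover have "le_star (ga a) (Hf g)" using g[OF \<open>a \<in> A\<close>] Hf_ge le_star_trans_pw by blast
    ultimately show "sub_convergent (range (Hf g)) a" by (rule Hf_conv)
  qed
  then show False using A Hf_infcoinf unfolding ss_dual_family_def by blast
qed

lemma P4: "unbounded_family F \<Longrightarrow> ss_dual_family (aseq ` F)"
  unfolding ss_dual_family_def
proof (intro conjI notI)
  show "aseq ` F \<subseteq> S_ui" using aseq_S_ui by blast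
  assume F: "unbounded_family F" and "\<exists>X\<in>infcoinf. \<forall>a\<in>aseq ` F. sub_convergent X a"
  then obtain X where X: "X \<in> infcoinf" "\<And>f. f \<in> F \<Longrightarrow> sub_convergent X (aseq f)" by blast
  have "infinite X" using X(1) unfolding infcoinf_def by blast
  then have "\<forall>f\<in>F. le_star f (fX X)" using X(2) aseq_key by blast
  then show False using F unfolding unbounded_family_def by blast
qed

lemma dom_UNIV: "dominating_family UNIV"
  unfolding dominating_family_def le_star_def by (meson UNIV_I always_eventually order_refl)

lemma unb_UNIV: "unbounded_family UNIV"
  unfolding unbounded_family_def
proof
  assume "\<exists>g. \<forall>f\<in>UNIV. le_star f g"
  then obtain g where "le_star (\<lambda>n. Suc (g n)) g" by blast
  then have "eventually (\<lambda>n::nat. False) sequentially" unfolding le_star_def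
    by (auto elim: eventually_mono)
  then show False by simp
qed

theorem mainTheorem15:
  shows "same_min_card ss_family dominating_family \<and>
         same_min_card ss_dual_family unbounded_family"
  unfolding same_min_card_def
proof (intro conjI allI impI)
  show "\<exists>A. ss_family A" using P2[OF dom_UNIV] by blast
  show "\<exists>B. dominating_family B" using dom_UNIV by blast
  show "\<exists>A. ss_dual_family A" using P4[OF unb_UNIV] by blast
  show "\<exists>B. unbounded_family B" using unb_UNIV by blast
  show "\<exists>B. dominating_family B \<and> ordLeq3 (card_of B) (card_of A)" if "ss_family A" for A
    using P1[OF that] card_of_image by blast
  show "\<exists>A. ss_family A \<and> ordLeq3 (card_of A) (card_of B)" if "dominating_family B" for B
    using P2[OF that] card_of_image by blast
  show "\<exists>B. unbounded_family B \<and> ordLeq3 (card_of B) (card_of A)" if "ss_dual_family A" for A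
    using P3[OF that] card_of_image by blast
  show "\<exists>A. ss_dual_family A \<and> ordLeq3 (card_of A) (card_of B)" if "unbounded_family B" for B
    using P4[OF that] card_of_image by blast
qed

end
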